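(* For any metrized graph $\Gamma$ with $v$ vertices and any vertex $p\in V(\Gamma)$, $$4Kf(\Gamma)=v \cdot \sum_{e_i \in E(\Gamma)}\frac{L_i(R_{a_i,p}-R_{b_i,p})^2}{(L_i+R_i)^2} + \sum_{e_i \in E(\Gamma)}\frac{R_i}{L_i + R_i} \sum_{w \in V(\Gamma)}\big(r(p_i,w)+r(q_i,w)\big),$$ where $p_i,q_i$ denote the end points of $e_i$.
   Context: A metrized graph $\Gamma$ is a finite connected graph (multiple edges and self-loops allowed) each of whose edges is identified with a closed segment of positive length, with a finite nonempty vertex set $V(\Gamma)$ containing every point of valence $\neq2$; $v=\#V(\Gamma)$, $L_i$ the length of $e_i$, $r$ the effective resistance (edges as resistors of resistance equal to length). $Kf(\Gamma)=\frac12\sum_{p,q\in V(\Gamma)}r(p,q)$. For an edge $e_i$: if $\Gamma-e_i$ (interior deleted) is connected, $R_i$ is the effective resistance between $p_i,q_i$ in $\Gamma-e_i$, $R_{a_i,p}=\hat j_{p_i}(p,q_i)$, $R_{b_i,p}=\hat j_{q_i}(p,p_i)$ with $\hat j_z(x,y)$ the voltage function of $\Gamma-e_i$ (potential at $x$ when unit current enters at $y$ and exits at $z$, potential $0$ at $z$); if $e_i$ is a bridge, $R_{a_i,p}=0,R_{b_i,p}=R_i$ for $p$ in the component of $\Gamma-e_i$ containing $p_i$ and $R_{a_i,p}=R_i,R_{b_i,p}=0$ otherwise, with every expression in $R_i$ interpreted as its limit as $R_i\to\infty$; for a self-loop $R_i=0$. *)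

theory Defs
  imports Complex_Main
begin

text \<open>A metrized graph is modelled by its combinatorial data: a finite nonempty vertex
  set V, a finite set E of edge labels, endpoint maps src/tgt (so edge e joins src e and
  tgt e; multiple edges and self-loops allowed) and positive lengths L.  Effective
  resistances between vertices are those of the resistor network with resistance L e on e.\<close>

definition adj_rel :: "'e set \<Rightarrow> ('e \<Rightarrow> 'v) \<Rightarrow> ('e \<Rightarrow> 'v) \<Rightarrow> ('v \<times> 'v) set" where
  "adj_rel F src tgt = {(src e, tgt e) | e. e \<in> F} \<union> {(tgt e, src e) | e. e \<in> F}"

definition graph_connected ::
  "'v set \<Rightarrow> 'e set \<Rightarrow> ('e \<Rightarrow> 'v) \<Rightarrow> ('e \<Rightarrow> 'v) \<Rightarrow> bool" where
  "graph_connected V F src tgt \<longleftrightarrow> (\<forall>x\<in>V. \<forall>y\<in>V. (x, y) \<in> (adj_rel F src tgt)\<^sup>*)"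

definition metrized_graph ::
  "'v set \<Rightarrow> 'e set \<Rightarrow> ('e \<Rightarrow> 'v) \<Rightarrow> ('e \<Rightarrow> 'v) \<Rightarrow> ('e \<Rightarrow> real) \<Rightarrow> bool" where
  "metrized_graph V E src tgt L \<longleftrightarrow>
     finite V \<and> V \<noteq> {} \<and> finite E \<and>
     (\<forall>e\<in>E. src e \<in> V \<and> tgt e \<in> V \<and> L e > 0) \<and>
     graph_connected V E src tgt"

text \<open>\<open>is_potential V F src tgt L y z u\<close>: u is the potential (on the network with edge set F)
  when unit current enters at y and exits at z, grounded at z (u z = 0); u vanishes off V.\<close>

definition is_potential ::
  "'v set \<Rightarrow> 'e set \<Rightarrow> ('e \<Rightarrow> 'v) \<Rightarrow> ('e \<Rightarrow> 'v) \<Rightarrow> ('e \<Rightarrow> real) \<Rightarrow> 'v \<Rightarrow> 'v \<Rightarrow> ('v \<Rightarrow> real) \<Rightarrow> bool" where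
  "is_potential V F src tgt L y z u \<longleftrightarrow>
     u z = 0 \<and> (\<forall>w. w \<notin> V \<longrightarrow> u w = 0) \<and>
     (\<forall>w\<in>V. (\<Sum>e\<in>{e\<in>F. src e = w}. (u w - u (tgt e)) / L e)
            + (\<Sum>e\<in>{e\<in>F. tgt e = w}. (u w - u (src e)) / L e)
            = (if w = y then 1 else 0) - (if w = z then 1 else 0))"

definition jvolt ::
  "'v set \<Rightarrow> 'e set \<Rightarrow> ('e \<Rightarrow> 'v) \<Rightarrow> ('e \<Rightarrow> 'v) \<Rightarrow> ('e \<Rightarrow> real) \<Rightarrow> 'v \<Rightarrow> 'v \<Rightarrow> 'v \<Rightarrow> real" where
  "jvolt V F src tgt L z x y = (THE u. is_potential V F src tgt L y z u) x"

definition eff_res ::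
  "'v set \<Rightarrow> 'e set \<Rightarrow> ('e \<Rightarrow> 'v) \<Rightarrow> ('e \<Rightarrow> 'v) \<Rightarrow> ('e \<Rightarrow> real) \<Rightarrow> 'v \<Rightarrow> 'v \<Rightarrow> real" where
  "eff_res V F src tgt L x y = jvolt V F src tgt L y x x"

definition Kf ::
  "'v set \<Rightarrow> 'e set \<Rightarrow> ('e \<Rightarrow> 'v) \<Rightarrow> ('e \<Rightarrow> 'v) \<Rightarrow> ('e \<Rightarrow> real) \<Rightarrow> real" where
  "Kf V E src tgt L = (1/2) * (\<Sum>p\<in>V. \<Sum>q\<in>V. eff_res V E src tgt L p q)"

definition is_bridge ::
  "'v set \<Rightarrow> 'e set \<Rightarrow> ('e \<Rightarrow> 'v) \<Rightarrow> ('e \<Rightarrow> 'v) \<Rightarrow> 'e \<Rightarrow> bool" where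
  "is_bridge V E src tgt i \<longleftrightarrow> \<not> graph_connected V (E - {i}) src tgt"

definition R_edge ::
  "'v set \<Rightarrow> 'e set \<Rightarrow> ('e \<Rightarrow> 'v) \<Rightarrow> ('e \<Rightarrow> 'v) \<Rightarrow> ('e \<Rightarrow> real) \<Rightarrow> 'e \<Rightarrow> real" where
  "R_edge V E src tgt L i = eff_res V (E - {i}) src tgt L (src i) (tgt i)"

definition Ra ::
  "'v set \<Rightarrow> 'e set \<Rightarrow> ('e \<Rightarrow> 'v) \<Rightarrow> ('e \<Rightarrow> 'v) \<Rightarrow> ('e \<Rightarrow> real) \<Rightarrow> 'e \<Rightarrow> 'v \<Rightarrow> real" where
  "Ra V E src tgt L i p = jvolt V (E - {i}) src tgt L (src i) p (tgt i)"

definition Rb ::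
  "'v set \<Rightarrow> 'e set \<Rightarrow> ('e \<Rightarrow> 'v) \<Rightarrow> ('e \<Rightarrow> 'v) \<Rightarrow> ('e \<Rightarrow> real) \<Rightarrow> 'e \<Rightarrow> 'v \<Rightarrow> real" where
  "Rb V E src tgt L i p = jvolt V (E - {i}) src tgt L (tgt i) p (src i)"

text \<open>Bridge case: R_{a_i,p}, R_{b_i,p} as functions of the parameter R_i = t
  (to be sent to infinity).\<close>
definition in_comp_src ::
  "'e set \<Rightarrow> ('e \<Rightarrow> 'v) \<Rightarrow> ('e \<Rightarrow> 'v) \<Rightarrow> 'e \<Rightarrow> 'v \<Rightarrow> bool" where
  "in_comp_src E src tgt i p \<longleftrightarrow> (src i, p) \<in> (adj_rel (E - {i}) src tgt)\<^sup>*"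

definition Ra_br :: "'e set \<Rightarrow> ('e \<Rightarrow> 'v) \<Rightarrow> ('e \<Rightarrow> 'v) \<Rightarrow> 'e \<Rightarrow> 'v \<Rightarrow> real \<Rightarrow> real" where
  "Ra_br E src tgt i p t = (if in_comp_src E src tgt i p then 0 else t)"

definition Rb_br :: "'e set \<Rightarrow> ('e \<Rightarrow> 'v) \<Rightarrow> ('e \<Rightarrow> 'v) \<Rightarrow> 'e \<Rightarrow> 'v \<Rightarrow> real \<Rightarrow> real" where
  "Rb_br E src tgt i p t = (if in_comp_src E src tgt i p then t else 0)"

definition term1 ::
  "'v set \<Rightarrow> 'e set \<Rightarrow> ('e \<Rightarrow> 'v) \<Rightarrow> ('e \<Rightarrow> 'v) \<Rightarrow> ('e \<Rightarrow> real) \<Rightarrow> 'v \<Rightarrow> 'e \<Rightarrow> real" where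
  "term1 V E src tgt L p i =
     (if is_bridge V E src tgt i then
        Lim at_top (\<lambda>t::real. L i * (Ra_br E src tgt i p t - Rb_br E src tgt i p t)\<^sup>2 / (L i + t)\<^sup>2)
      else L i * (Ra V E src tgt L i p - Rb V E src tgt L i p)\<^sup>2 / (L i + R_edge V E src tgt L i)\<^sup>2)"

definition factor2 ::
  "'v set \<Rightarrow> 'e set \<Rightarrow> ('e \<Rightarrow> 'v) \<Rightarrow> ('e \<Rightarrow> 'v) \<Rightarrow> ('e \<Rightarrow> real) \<Rightarrow> 'e \<Rightarrow> real" where
  "factor2 V E src tgt L i =
     (if is_bridge V E src tgt i then Lim at_top (\<lambda>t::real. t / (L i + t))
      else R_edge V E src tgt L i / (L i + R_edge V E src tgt L i))"

end

theory Submission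
  imports Defs "HOL-Library.Function_Algebras"
begin

definition lap :: "'e set \<Rightarrow> ('e \<Rightarrow> 'v) \<Rightarrow> ('e \<Rightarrow> 'v) \<Rightarrow> ('e \<Rightarrow> real) \<Rightarrow> ('v \<Rightarrow> real) \<Rightarrow> 'v \<Rightarrow> real" where
  "lap F src tgt L u w = (\<Sum>e\<in>{e\<in>F. src e = w}. (u w - u (tgt e)) / L e)
            + (\<Sum>e\<in>{e\<in>F. tgt e = w}. (u w - u (src e)) / L e)"

definition netw :: "'v set \<Rightarrow> 'e set \<Rightarrow> ('e \<Rightarrow> 'v) \<Rightarrow> ('e \<Rightarrow> 'v) \<Rightarrow> ('e \<Rightarrow> real) \<Rightarrow> bool" where
  "netw V F src tgt L \<longleftrightarrow> finite V \<and> finite F \<and> (\<forall>e\<in>F. src e \<in> V \<and> tgt e \<in> V \<and> L e > 0)"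

lemma is_potential_lap:
  "is_potential V F src tgt L y z u \<longleftrightarrow> u z = 0 \<and> (\<forall>w. w \<notin> V \<longrightarrow> u w = 0) \<and>
     (\<forall>w\<in>V. lap F src tgt L u w = (if w = y then 1 else 0) - (if w = z then 1 else 0))"
  unfolding is_potential_def lap_def by simp

lemma regroup:
  assumes "netw V F src tgt L"
  shows "(\<Sum>w\<in>V. (\<Sum>e\<in>{e\<in>F. src e = w}. h w e) + (\<Sum>e\<in>{e\<in>F. tgt e = w}. k w e))
         = (\<Sum>e\<in>F. h (src e) e + k (tgt e) e)"
proof -
  have fV: "finite V" and fF: "finite F" and sub1: "src ` F \<subseteq> V" and sub2: "tgt ` F \<subseteq> V"
    using assms unfolding netw_def by auto
  have 1: "(\<Sum>w\<in>V. \<Sum>e\<in>{e\<in>F. src e = w}. h w e) = (\<Sum>e\<in>F. h (src e) e)"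
  proof -
    have "(\<Sum>w\<in>V. \<Sum>e\<in>{e\<in>F. src e = w}. h w e) = (\<Sum>w\<in>V. \<Sum>e\<in>{e\<in>F. src e = w}. h (src e) e)"
      by (intro sum.cong) auto
    also have "\<dots> = (\<Sum>e\<in>F. h (src e) e)"
      using sum.group[OF fF fV sub1, of "\<lambda>e. h (src e) e"] by simp
    finally show ?thesis .
  qed
  have 2: "(\<Sum>w\<in>V. \<Sum>e\<in>{e\<in>F. tgt e = w}. k w e) = (\<Sum>e\<in>F. k (tgt e) e)"
  proof -
    have "(\<Sum>w\<in>V. \<Sum>e\<in>{e\<in>F. tgt e = w}. k w e) = (\<Sum>w\<in>V. \<Sum>e\<in>{e\<in>F. tgt e = w}. k (tgt e) e)"
      by (intro sum.cong) auto
    also have "\<dots> = (\<Sum>e\<in>F. k (tgt e) e)"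
      using sum.group[OF fF fV sub2, of "\<lambda>e. k (tgt e) e"] by simp
    finally show ?thesis .
  qed
  show ?thesis using 1 2 by (simp add: sum.distrib)
qed

lemma green:
  assumes "netw V F src tgt L"
  shows "(\<Sum>w\<in>V. f w * lap F src tgt L u w)
       = (\<Sum>e\<in>F. (f (src e) - f (tgt e)) * (u (src e) - u (tgt e)) / L e)"
proof -
  have "(\<Sum>w\<in>V. f w * lap F src tgt L u w) =
     (\<Sum>w\<in>V. (\<Sum>e\<in>{e\<in>F. src e = w}. f w * (u w - u (tgt e)) / L e) + (\<Sum>e\<in>{e\<in>F. tgt e = w}. f w * (u w - u (src e)) / L e))"
    unfolding lap_def by (simp add: distrib_left sum_distrib_left)
  also have "\<dots> = (\<Sum>e\<in>F. f (src e) * (u (src e) - u (tgt e)) / L e + f (tgt e) * (u (tgt e) - u (src e)) / L e)"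
    by (rule regroup[OF assms])
  also have "\<dots> = (\<Sum>e\<in>F. (f (src e) - f (tgt e)) * (u (src e) - u (tgt e)) / L e)"
  proof (intro sum.cong refl)
    fix e
    show "f (src e) * (u (src e) - u (tgt e)) / L e + f (tgt e) * (u (tgt e) - u (src e)) / L e =
         (f (src e) - f (tgt e)) * (u (src e) - u (tgt e)) / L e"
      by (simp only: add_divide_distrib[symmetric]) (simp add: algebra_simps)
  qed
  finally show ?thesis .
qed

lemma lap_sum_zero:
  assumes "netw V F src tgt L"
  shows "(\<Sum>w\<in>V. lap F src tgt L u w) = 0"
  using green[OF assms, of "\<lambda>_. 1" u] by simp

lemma sum_split_diff:
  "(\<Sum>e\<in>A. ((a::real) - b - (g e - h e)) / (c e)) = (\<Sum>e\<in>A. (a - g e) / c e) - (\<Sum>e\<in>A. (b - h e) / c e)"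
proof -
  have "(\<Sum>e\<in>A. (a - b - (g e - h e)) / (c e)) = (\<Sum>e\<in>A. (a - g e) / c e - (b - h e) / c e)"
    by (intro sum.cong refl) (simp only: diff_divide_distrib[symmetric], simp add: algebra_simps)
  then show ?thesis by (simp add: sum_subtractf)
qed

lemma sum_split_add:
  "(\<Sum>e\<in>A. ((a::real) + b - (g e + h e)) / (c e)) = (\<Sum>e\<in>A. (a - g e) / c e) + (\<Sum>e\<in>A. (b - h e) / c e)"
proof -
  have "(\<Sum>e\<in>A. (a + b - (g e + h e)) / (c e)) = (\<Sum>e\<in>A. (a - g e) / c e + (b - h e) / c e)"
    by (intro sum.cong refl) (simp only: add_divide_distrib[symmetric], simp add: algebra_simps)
  then show ?thesis by (simp add: sum.distrib)
qed

lemma lap_diff: "lap F src tgt L (\<lambda>x. u x - v x) w = lap F src tgt L u w - lap F src tgt L v w"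
  unfolding lap_def sum_split_diff by simp

lemma lap_scale: "lap F src tgt L (\<lambda>x. c * u x) w = c * lap F src tgt L u w"
  unfolding lap_def by (simp add: sum_distrib_left distrib_left right_diff_distrib[symmetric])

lemma lap_add: "lap F src tgt L (\<lambda>x. u x + v x) w = lap F src tgt L u w + lap F src tgt L v w"
  unfolding lap_def sum_split_add by simp

lemma lap_local:
  assumes "netw V F src tgt L" "w \<in> V" "\<And>x. x \<in> V \<Longrightarrow> u x = u' x + c"
  shows "lap F src tgt L u w = lap F src tgt L u' w"
  using assms unfolding lap_def netw_def
  by (intro arg_cong2[where f="(+)"] sum.cong) auto

lemma const_along:
  assumes "\<forall>e\<in>F. u (src e) = u (tgt e)" "(x, y) \<in> (adj_rel F src tgt)\<^sup>*"
  shows "u x = u y"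
  using assms(2)
proof induction
  case base then show ?case by simp
next
  case (step y z)
  then show ?case using assms(1) unfolding adj_rel_def by auto
qed

lemma harmonic_const:
  assumes N: "netw V F src tgt L" and C: "graph_connected V F src tgt"
    and H: "\<forall>w\<in>V. lap F src tgt L u w = 0" and x: "x \<in> V" and y: "y \<in> V"
  shows "u x = u y"
proof -
  have z: "(\<Sum>e\<in>F. (u (src e) - u (tgt e)) * (u (src e) - u (tgt e)) / L e) = 0"
    using green[OF N, of u u] H by simp
  have fF: "finite F" using N unfolding netw_def by auto
  have nn: "\<And>e. e \<in> F \<Longrightarrow> 0 \<le> (u (src e) - u (tgt e)) * (u (src e) - u (tgt e)) / L e"
    using N unfolding netw_def by auto
  have h: "\<forall>e\<in>F. (u (src e) - u (tgt e)) * (u (src e) - u (tgt e)) / L e = 0"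
    using sum_nonneg_eq_0_iff[of F "\<lambda>e. (u (src e) - u (tgt e)) * (u (src e) - u (tgt e)) / L e"] fF nn z by blast
  have h2: "\<forall>e\<in>F. u (src e) = u (tgt e)"
  proof
    fix e assume e: "e \<in> F"
    then have "L e > 0" using N unfolding netw_def by auto
    then show "u (src e) = u (tgt e)" using h e by auto
  qed
  have "(x, y) \<in> (adj_rel F src tgt)\<^sup>*" using C x y unfolding graph_connected_def by blast
  then show ?thesis using const_along[of F u src tgt x y] h2 by blast
qed

lemma sum_fun_apply: "(sum f A) x = (\<Sum>a\<in>A. (f a x :: real))"
  by (induct A rule: infinite_finite_induct) auto

lemma fin_surj:
  fixes T :: "('v \<Rightarrow> real) \<Rightarrow> ('v \<Rightarrow> real)" and S :: "'v set"
  assumes fS: "finite S"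
    and add: "\<And>u w. T (u + w) = T u + T w"
    and sc: "\<And>c u. T (\<lambda>x. c * u x) = (\<lambda>x. c * T u x)"
    and into: "\<And>u x. x \<notin> S \<Longrightarrow> T u x = 0"
    and inj: "\<And>u. (\<forall>x. x \<notin> S \<longrightarrow> u x = 0) \<Longrightarrow> T u = 0 \<Longrightarrow> u = 0"
    and f: "\<forall>x. x \<notin> S \<longrightarrow> f x = 0"
  shows "\<exists>u. (\<forall>x. x \<notin> S \<longrightarrow> u x = 0) \<and> T u = f"
proof -
  define scl :: "real \<Rightarrow> ('v \<Rightarrow> real) \<Rightarrow> ('v \<Rightarrow> real)" where "scl = (\<lambda>c u x. c * u x)"
  interpret vs: vector_space scl
    by unfold_locales (auto simp: scl_def fun_eq_iff algebra_simps)
  interpret lT: Vector_Spaces.linear scl scl T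
    by unfold_locales (simp_all add: add sc scl_def)
  define W where "W = {u::'v\<Rightarrow>real. \<forall>x. x \<notin> S \<longrightarrow> u x = 0}"
  define \<delta> where "\<delta> = (\<lambda>y::'v. \<lambda>x::'v. if x = y then (1::real) else 0)"
  have subW: "vs.subspace W"
    by (rule vs.subspaceI) (auto simp: W_def scl_def)
  have TW: "T u \<in> W" for u using into W_def by auto
  have Wspan: "W \<subseteq> vs.span (\<delta> ` S)"
  proof
    fix u assume u: "u \<in> W"
    have "u = (\<Sum>y\<in>S. scl (u y) (\<delta> y))"
    proof
      fix x
      show "u x = (\<Sum>y\<in>S. scl (u y) (\<delta> y)) x"
        unfolding sum_fun_apply scl_def \<delta>_def using u fS unfolding W_def
        by (cases "x \<in> S") (auto simp: if_distrib cong: if_cong)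
    qed
    also have "\<dots> \<in> vs.span (\<delta> ` S)"
      by (intro vs.span_sum vs.span_scale vs.span_base) auto
    finally show "u \<in> vs.span (\<delta> ` S)" .
  qed
  obtain B where B: "B \<subseteq> W" "vs.independent B" "W \<subseteq> vs.span B" "card B = vs.dim W"
    using vs.basis_exists[of W] by blast
  have fB: "finite B"
    using vs.independent_span_bound[of "\<delta> ` S" B] B Wspan fS by auto
  have spanB: "vs.span B \<subseteq> W" using vs.span_minimal[OF B(1) subW] .
  have injT: "inj_on T (vs.span B)"
  proof (rule inj_onI)
    fix u w assume u: "u \<in> vs.span B" and w: "w \<in> vs.span B" and e: "T u = T w"
    have "T (u - w) = 0" using e lT.diff by simp
    moreover have "u \<in> W" "w \<in> W" using u w spanB by auto
    then have "\<forall>x. x \<notin> S \<longrightarrow> (u - w) x = 0" unfolding W_def by auto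
    ultimately have "u - w = 0" using inj by blast
    then show "u = w" by simp
  qed
  have indT: "vs.independent (T ` B)"
    using lT.independent_injective_image[OF B(2) injT] .
  have cardT: "card (T ` B) = card B"
    using card_image[OF inj_on_subset[OF injT vs.span_superset]] .
  have "f \<in> vs.span (T ` B)"
  proof (rule ccontr)
    assume nf: "f \<notin> vs.span (T ` B)"
    have ind2: "vs.independent (insert f (T ` B))"
      using vs.independent_insertI[OF nf indT] .
    have "insert f (T ` B) \<subseteq> vs.span B"
      using B(3) f TW unfolding W_def by auto
    then have "card (insert f (T ` B)) \<le> card B"
      using vs.independent_span_bound[OF fB ind2] by auto
    moreover have "f \<notin> T ` B" using nf vs.span_base by blast
    ultimately show False using cardT fB by simp
  qed
  then obtain u where "u \<in> vs.span B" "T u = f"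
    using lT.span_image by auto
  then show ?thesis using spanB unfolding W_def by auto
qed


lemma lap_at_z:
  assumes N: "netw V F src tgt L" and z: "z \<in> V"
  shows "lap F src tgt L u z = - (\<Sum>w\<in>V-{z}. lap F src tgt L u w)"
proof -
  have fV: "finite V" using N unfolding netw_def by auto
  have "(\<Sum>w\<in>V. lap F src tgt L u w) = lap F src tgt L u z + (\<Sum>w\<in>V-{z}. lap F src tgt L u w)"
    using sum.remove[OF fV z] by simp
  then show ?thesis using lap_sum_zero[OF N] by simp
qed

lemma exists_sol:
  assumes N: "netw V F src tgt L" and C: "graph_connected V F src tgt" and z: "z \<in> V"
    and fs: "(\<Sum>w\<in>V. f w) = 0"
  shows "\<exists>u. u z = 0 \<and> (\<forall>w. w \<notin> V \<longrightarrow> u w = 0) \<and> (\<forall>w\<in>V. lap F src tgt L u w = f w)"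
proof -
  have fV: "finite V" using N unfolding netw_def by auto
  define T where "T = (\<lambda>u w. if w \<in> V then (if w = z then u z else lap F src tgt L u w) else (0::real))"
  define f' where "f' = (\<lambda>w. if w \<in> V then (if w = z then 0 else f w) else (0::real))"
  have "\<exists>u. (\<forall>x. x \<notin> V \<longrightarrow> u x = 0) \<and> T u = f'"
  proof (rule fin_surj[OF fV])
    show "T (u + w) = T u + T w" for u w
      using lap_add[of F src tgt L u w] unfolding T_def by (auto simp: fun_eq_iff plus_fun_def)
    show "T (\<lambda>x. c * u x) = (\<lambda>x. c * T u x)" for c u
      using lap_scale[of F src tgt L c u] unfolding T_def by (auto simp: fun_eq_iff)
    show "x \<notin> V \<Longrightarrow> T u x = 0" for u x unfolding T_def by simp
    show "\<forall>x. x \<notin> V \<longrightarrow> f' x = 0" unfolding f'_def by simp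
    show "u = 0" if u0: "\<forall>x. x \<notin> V \<longrightarrow> u x = 0" and Tu: "T u = 0" for u
    proof -
      have uz: "u z = 0" using Tu z unfolding T_def by (auto simp: fun_eq_iff dest: spec[of _ z])
      have h1: "\<forall>w\<in>V-{z}. lap F src tgt L u w = 0"
      proof
        fix w assume "w \<in> V - {z}"
        then show "lap F src tgt L u w = 0" using fun_cong[OF Tu, of w] unfolding T_def by auto
      qed
      have "\<forall>w\<in>V. lap F src tgt L u w = 0"
        using h1 lap_at_z[OF N z, of u] by auto
      then have "\<forall>x\<in>V. u x = u z" using harmonic_const[OF N C] z by blast
      then show "u = 0" using uz u0 by (auto simp: fun_eq_iff)
    qed
  qed
  then obtain u where u0: "\<forall>x. x \<notin> V \<longrightarrow> u x = 0" and Tu: "T u = f'" by blast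
  have uz: "u z = 0" using fun_cong[OF Tu, of z] z unfolding T_def f'_def by auto
  have h1: "\<forall>w\<in>V-{z}. lap F src tgt L u w = f w"
  proof
    fix w assume "w \<in> V - {z}"
    then show "lap F src tgt L u w = f w" using fun_cong[OF Tu, of w] unfolding T_def f'_def by auto
  qed
  have "lap F src tgt L u z = f z"
  proof -
    have "lap F src tgt L u z = - (\<Sum>w\<in>V-{z}. f w)" using lap_at_z[OF N z, of u] h1 by simp
    also have "\<dots> = f z" using fs sum.remove[OF fV z, of f] by simp
    finally show ?thesis .
  qed
  then show ?thesis using uz u0 h1 by blast
qed

lemma potential_unique:
  assumes N: "netw V F src tgt L" and C: "graph_connected V F src tgt" and z: "z \<in> V"
    and u1: "is_potential V F src tgt L y z u1" and u2: "is_potential V F src tgt L y z u2"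
  shows "u1 = u2"
proof
  fix x
  have H: "\<forall>w\<in>V. lap F src tgt L (\<lambda>x. u1 x - u2 x) w = 0"
    using u1 u2 unfolding is_potential_lap by (simp add: lap_diff)
  show "u1 x = u2 x"
  proof (cases "x \<in> V")
    case True
    have "u1 x - u2 x = u1 z - u2 z" using harmonic_const[OF N C H True z] by simp
    then show ?thesis using u1 u2 unfolding is_potential_lap by simp
  next
    case False
    then show ?thesis using u1 u2 unfolding is_potential_lap by simp
  qed
qed

lemma jvolt_eq:
  assumes N: "netw V F src tgt L" and C: "graph_connected V F src tgt" and z: "z \<in> V"
    and u: "is_potential V F src tgt L y z u"
  shows "jvolt V F src tgt L z x y = u x"
proof -
  have "(THE u. is_potential V F src tgt L y z u) = u"
  proof (rule the_equality[where P="is_potential V F src tgt L y z", OF u])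
    fix u' assume "is_potential V F src tgt L y z u'"
    then show "u' = u" by (rule potential_unique[OF N C z _ u])
  qed
  then show ?thesis unfolding jvolt_def by simp
qed


lemma lap_remove:
  assumes i: "i \<in> E" and fE: "finite E"
  shows "lap E src tgt L u w = lap (E - {i}) src tgt L u w
     + (if w = src i then (u (src i) - u (tgt i)) / L i else 0)
     + (if w = tgt i then (u (tgt i) - u (src i)) / L i else 0)"
proof -
    have s1: "(\<Sum>e\<in>{e\<in>E. src e = w}. (u w - u (tgt e)) / L e) =
        (\<Sum>e\<in>{e\<in>E - {i}. src e = w}. (u w - u (tgt e)) / L e) + (if w = src i then (u (src i) - u (tgt i)) / L i else 0)"
    proof (cases "src i = w")
      case True
      then have "{e\<in>E. src e = w} = insert i {e\<in>E - {i}. src e = w}" using i by auto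
      then show ?thesis using True fE by simp
    next
      case False
      then have "{e\<in>E. src e = w} = {e\<in>E - {i}. src e = w}" by auto
      then show ?thesis using False by simp
    qed
    have s2: "(\<Sum>e\<in>{e\<in>E. tgt e = w}. (u w - u (src e)) / L e) =
        (\<Sum>e\<in>{e\<in>E - {i}. tgt e = w}. (u w - u (src e)) / L e) + (if w = tgt i then (u (tgt i) - u (src i)) / L i else 0)"
    proof (cases "tgt i = w")
      case True
      then have "{e\<in>E. tgt e = w} = insert i {e\<in>E - {i}. tgt e = w}" using i by auto
      then show ?thesis using True fE by simp
    next
      case False
      then have "{e\<in>E. tgt e = w} = {e\<in>E - {i}. tgt e = w}" by auto
      then show ?thesis using False by simp
    qed
    show ?thesis unfolding lap_def s1 s2 by simp
qed


lemma adj_rel_sym: "(x, y) \<in> (adj_rel F src tgt)\<^sup>* \<Longrightarrow> (y, x) \<in> (adj_rel F src tgt)\<^sup>*"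
proof (induction rule: rtrancl_induct)
  case base then show ?case by simp
next
  case (step y z)
  then have "(z, y) \<in> adj_rel F src tgt" unfolding adj_rel_def by auto
  then show ?case using step by (meson converse_rtrancl_into_rtrancl)
qed

lemma reach_split:
  assumes i: "i \<in> E" and r: "(src i, x) \<in> (adj_rel E src tgt)\<^sup>*"
  shows "(src i, x) \<in> (adj_rel (E - {i}) src tgt)\<^sup>* \<or> (tgt i, x) \<in> (adj_rel (E - {i}) src tgt)\<^sup>*"
  using r
proof (induction rule: rtrancl_induct)
  case base then show ?case by simp
next
  case (step y z)
  from step(2) obtain e where e: "e \<in> E" "(y = src e \<and> z = tgt e) \<or> (y = tgt e \<and> z = src e)"
    unfolding adj_rel_def by auto
  show ?case
  proof (cases "e = i")
    case True
    then show ?thesis using e by auto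
  next
    case False
    then have "(y, z) \<in> adj_rel (E - {i}) src tgt" using e unfolding adj_rel_def by auto
    then show ?thesis using step(3) by (meson rtrancl.rtrancl_into_rtrancl)
  qed
qed

lemma netw_minus: "netw V E src tgt L \<Longrightarrow> netw V (E - {i}) src tgt L"
  unfolding netw_def by auto

lemma sum_delta_lap:
  assumes fV: "finite V" and a: "a \<in> V" and b: "b \<in> V"
    and H: "\<forall>w\<in>V. lap F src tgt L u w = c * ((if w = a then 1 else 0) - (if w = b then 1 else 0))"
  shows "(\<Sum>w\<in>V. f w * lap F src tgt L u w) = c * (f a - f b)"
proof -
  have "(\<Sum>w\<in>V. f w * lap F src tgt L u w) = (\<Sum>w\<in>V. c * (if w = a then f w else 0) - c * (if w = b then f w else 0))"
  proof (intro sum.cong refl)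
    fix w assume "w \<in> V"
    then have l: "lap F src tgt L u w = c * ((if w = a then 1 else 0) - (if w = b then 1 else 0))" using H by blast
    show "f w * lap F src tgt L u w = c * (if w = a then f w else 0) - c * (if w = b then f w else 0)"
      unfolding l by (auto simp: algebra_simps)
  qed
  also have "\<dots> = c * (f a - f b)" using a b fV
    by (simp add: sum_subtractf sum_distrib_left[symmetric] if_distrib[of "\<lambda>x. c * x"] right_diff_distrib cong: if_cong)
  finally show ?thesis .
qed

lemma energy_delta:
  assumes N: "netw V F src tgt L" and a: "a \<in> V" and b: "b \<in> V"
    and H: "\<forall>w\<in>V. lap F src tgt L u w = c * ((if w = a then 1 else 0) - (if w = b then 1 else 0))"
  shows "(\<Sum>e\<in>F. (u (src e) - u (tgt e)) * (u (src e) - u (tgt e)) / L e) = c * (u a - u b)"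
proof -
  have fV: "finite V" using N unfolding netw_def by auto
  have "(\<Sum>w\<in>V. u w * lap F src tgt L u w) = (\<Sum>w\<in>V. c * (if w = a then u w else 0) - c * (if w = b then u w else 0))"
  proof (intro sum.cong refl)
    fix w assume "w \<in> V"
    then have l: "lap F src tgt L u w = c * ((if w = a then 1 else 0) - (if w = b then 1 else 0))" using H by blast
    show "u w * lap F src tgt L u w = c * (if w = a then u w else 0) - c * (if w = b then u w else 0)"
      unfolding l by (auto simp: algebra_simps)
  qed
  also have "\<dots> = c * (u a - u b)" using a b fV
    by (simp add: sum_subtractf sum_distrib_left[symmetric] if_distrib[of "\<lambda>x. c * x"] right_diff_distrib cong: if_cong)
  finally show ?thesis using green[OF N, of u u] by simp
qed

lemma lim1: assumes "(c::real) > 0" shows "((\<lambda>x::real. x / (c + x)) \<longlongrightarrow> 1) at_top"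
proof -
  have "((\<lambda>x. c * inverse (c + x)) \<longlongrightarrow> c * 0) at_top"
    by (intro tendsto_mult tendsto_const tendsto_inverse_0_at_top filterlim_tendsto_add_at_top[OF tendsto_const filterlim_ident])
  then have "((\<lambda>x. 1 - c * inverse (c + x)) \<longlongrightarrow> 1 - 0) at_top"
    by (intro tendsto_diff tendsto_const) simp
  moreover have "\<forall>\<^sub>F x in at_top. 1 - c * inverse (c + x) = x / (c + x)"
    using eventually_gt_at_top[of 0] by eventually_elim (use assms in \<open>auto simp: field_simps\<close>)
  ultimately show ?thesis by (simp add: tendsto_cong)
qed
lemma lim2: assumes "(c::real) > 0" shows "((\<lambda>x::real. c * x\<^sup>2 / (c + x)\<^sup>2) \<longlongrightarrow> c) at_top"
proof -
  have "((\<lambda>x::real. c * (x / (c + x))\<^sup>2) \<longlongrightarrow> c * 1\<^sup>2) at_top"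
    by (intro tendsto_mult tendsto_const tendsto_power lim1[OF assms])
  then show ?thesis by (simp add: power_divide)
qed

lemma deletion:
  assumes N: "netw V E src tgt L" and C: "graph_connected V E src tgt" and i: "i \<in> E" and p: "p \<in> V"
    and phi: "is_potential V E src tgt L (src i) (tgt i) \<phi>"
  shows "factor2 V E src tgt L i = (\<phi> (src i) - \<phi> (tgt i)) / L i \<and>
         term1 V E src tgt L p i = (\<phi> (src i) + \<phi> (tgt i) - 2 * \<phi> p)\<^sup>2 / L i"
proof -
  define a where "a = src i"
  define b where "b = tgt i"
  define F where "F = E - {i}"
  have fE: "finite E" and fV: "finite V" and aV: "a \<in> V" and bV: "b \<in> V" and Lp: "L i > 0"
    using N i unfolding netw_def a_def b_def by auto
  have NF: "netw V F src tgt L" unfolding F_def using netw_minus[OF N] .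
  define t where "t = (\<phi> a - \<phi> b) / L i"
  have phib: "\<phi> b = 0" using phi unfolding is_potential_lap b_def by simp
  have phi0: "\<forall>w. w \<notin> V \<longrightarrow> \<phi> w = 0" using phi unfolding is_potential_lap by simp
  have phia: "\<phi> a = t * L i" using Lp phib unfolding t_def by simp
  have lapF: "\<forall>w\<in>V. lap F src tgt L \<phi> w = (1 - t) * ((if w = a then 1 else 0) - (if w = b then 1 else 0))"
  proof
    fix w assume w: "w \<in> V"
    have "lap E src tgt L \<phi> w = (if w = a then 1 else 0) - (if w = b then 1 else 0)"
      using phi w unfolding is_potential_lap a_def b_def by simp
    moreover have "lap E src tgt L \<phi> w = lap F src tgt L \<phi> w
     + (if w = a then t else 0) + (if w = b then - t else 0)"
      using lap_remove[OF i fE, of src tgt L \<phi> w] unfolding F_def a_def[symmetric] b_def[symmetric] t_def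
      by (simp add: minus_divide_left)
    ultimately show "lap F src tgt L \<phi> w = (1 - t) * ((if w = a then 1 else 0) - (if w = b then 1 else 0))"
      by (auto simp: algebra_simps split: if_splits)
  qed
  have enE: "(\<Sum>e\<in>E. (\<phi> (src e) - \<phi> (tgt e)) * (\<phi> (src e) - \<phi> (tgt e)) / L e) = \<phi> a - \<phi> b"
    using energy_delta[OF N aV bV, of \<phi> 1] phi unfolding is_potential_lap a_def b_def by simp
  have enF: "(\<Sum>e\<in>F. (\<phi> (src e) - \<phi> (tgt e)) * (\<phi> (src e) - \<phi> (tgt e)) / L e) = L i * t * (1 - t)"
  proof -
    have "(\<Sum>e\<in>E. (\<phi> (src e) - \<phi> (tgt e)) * (\<phi> (src e) - \<phi> (tgt e)) / L e)
       = (\<phi> a - \<phi> b) * (\<phi> a - \<phi> b) / L i + (\<Sum>e\<in>F. (\<phi> (src e) - \<phi> (tgt e)) * (\<phi> (src e) - \<phi> (tgt e)) / L e)"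
      using sum.remove[OF fE i] unfolding F_def a_def b_def by simp
    then show ?thesis using enE phia phib Lp by (simp add: algebra_simps power2_eq_square)
  qed
  show ?thesis
  proof (cases "is_bridge V E src tgt i")
    case True
    let ?R = "adj_rel F src tgt"
    have reach: "\<forall>x\<in>V. (a, x) \<in> ?R\<^sup>* \<or> (b, x) \<in> ?R\<^sup>*"
    proof
      fix x assume x: "x \<in> V"
      then have "(src i, x) \<in> (adj_rel E src tgt)\<^sup>*" using C aV unfolding graph_connected_def a_def by blast
      from reach_split[OF i this] show "(a, x) \<in> ?R\<^sup>* \<or> (b, x) \<in> ?R\<^sup>*"
        unfolding F_def a_def b_def .
    qed
    have nb: "(a, b) \<notin> ?R\<^sup>*"
    proof
      assume ab: "(a, b) \<in> ?R\<^sup>*"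
      have ra: "(a, x) \<in> ?R\<^sup>*" if x: "x \<in> V" for x
      proof -
        have "(a, x) \<in> ?R\<^sup>* \<or> (b, x) \<in> ?R\<^sup>*" using bspec[OF reach x] .
        then show ?thesis
        proof
          assume "(b, x) \<in> ?R\<^sup>*" then show ?thesis by (rule rtrancl_trans[OF ab])
        qed
      qed
      have "graph_connected V F src tgt"
        unfolding graph_connected_def
      proof (intro ballI)
        fix x y assume x: "x \<in> V" and y: "y \<in> V"
        have "(x, a) \<in> ?R\<^sup>*" using adj_rel_sym[OF ra[OF x]] .
        then show "(x, y) \<in> ?R\<^sup>*" by (rule rtrancl_trans[OF _ ra[OF y]])
      qed
      then show False using True unfolding is_bridge_def F_def by blast
    qed
    define \<chi> where "\<chi> = (\<lambda>w. if (a, w) \<in> ?R\<^sup>* then (1::real) else 0)"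
    have chi_e: "\<forall>e\<in>F. \<chi> (src e) = \<chi> (tgt e)"
    proof
      fix e assume e: "e \<in> F"
      have e1: "(src e, tgt e) \<in> ?R" and e2: "(tgt e, src e) \<in> ?R" using e unfolding adj_rel_def by auto
      have "(a, src e) \<in> ?R\<^sup>* \<longleftrightarrow> (a, tgt e) \<in> ?R\<^sup>*"
      proof
        assume "(a, src e) \<in> ?R\<^sup>*" then show "(a, tgt e) \<in> ?R\<^sup>*" using e1 by (rule rtrancl_into_rtrancl)
      next
        assume "(a, tgt e) \<in> ?R\<^sup>*" then show "(a, src e) \<in> ?R\<^sup>*" using e2 by (rule rtrancl_into_rtrancl)
      qed
      then show "\<chi> (src e) = \<chi> (tgt e)" unfolding \<chi>_def by simp
    qed
    have "(\<Sum>w\<in>V. \<chi> w * lap F src tgt L \<phi> w) = 0"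
      using green[OF NF, of \<chi> \<phi>] chi_e by simp
    moreover have "(\<Sum>w\<in>V. \<chi> w * lap F src tgt L \<phi> w) = (1 - t) * (\<chi> a - \<chi> b)"
      by (rule sum_delta_lap[OF fV aV bV lapF])
    moreover have "\<chi> a = 1" "\<chi> b = 0" unfolding \<chi>_def using nb by auto
    ultimately have t1: "t = 1" by simp
    have "\<forall>e\<in>F. (\<phi> (src e) - \<phi> (tgt e)) * (\<phi> (src e) - \<phi> (tgt e)) / L e = 0"
    proof -
      have fF: "finite F" using NF unfolding netw_def by auto
      have "\<forall>e\<in>F. 0 \<le> (\<phi> (src e) - \<phi> (tgt e)) * (\<phi> (src e) - \<phi> (tgt e)) / L e"
        using NF unfolding netw_def by auto
      then show ?thesis using enF t1 fF by (simp add: sum_nonneg_eq_0_iff)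
    qed
    then have ce: "\<forall>e\<in>F. \<phi> (src e) = \<phi> (tgt e)" using NF unfolding netw_def by fastforce
    have f2: "factor2 V E src tgt L i = 1"
    proof -
      have "((\<lambda>x::real. x / (L i + x)) \<longlongrightarrow> 1) at_top" using lim1[OF Lp] .
      then show ?thesis unfolding factor2_def using True by (simp add: tendsto_Lim)
    qed
    have lim: "((\<lambda>x::real. L i * (Ra_br E src tgt i p x - Rb_br E src tgt i p x)\<^sup>2 / (L i + x)\<^sup>2) \<longlongrightarrow> L i) at_top"
    proof (cases "in_comp_src E src tgt i p")
      case True
      have "((\<lambda>x::real. L i * (0 - x)\<^sup>2 / (L i + x)\<^sup>2) \<longlongrightarrow> L i) at_top" using lim2[OF Lp] by simp
      then show ?thesis unfolding Ra_br_def Rb_br_def using True by simp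
    next
      case False
      have "((\<lambda>x::real. L i * (x - 0)\<^sup>2 / (L i + x)\<^sup>2) \<longlongrightarrow> L i) at_top" using lim2[OF Lp] by simp
      then show ?thesis unfolding Ra_br_def Rb_br_def using False by simp
    qed
    have t1': "term1 V E src tgt L p i = L i"
      unfolding term1_def using True lim by (simp add: tendsto_Lim)
    have dab: "\<phi> a - \<phi> b = L i" using phia phib t1 by simp
    have sq: "(\<phi> a + \<phi> b - 2 * \<phi> p)\<^sup>2 = (\<phi> a - \<phi> b)\<^sup>2"
    proof -
      have "(a, p) \<in> ?R\<^sup>* \<or> (b, p) \<in> ?R\<^sup>*" using bspec[OF reach p] .
      then show ?thesis
      proof
        assume "(a, p) \<in> ?R\<^sup>*"
        then have "\<phi> a = \<phi> p" by (rule const_along[of F \<phi> src tgt, OF ce])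
        then have "\<phi> a + \<phi> b - 2 * \<phi> p = - (\<phi> a - \<phi> b)" by simp
        then show ?thesis by (simp only: power2_minus)
      next
        assume "(b, p) \<in> ?R\<^sup>*"
        then have "\<phi> b = \<phi> p" by (rule const_along[of F \<phi> src tgt, OF ce])
        then have "\<phi> a + \<phi> b - 2 * \<phi> p = \<phi> a - \<phi> b" by simp
        then show ?thesis by simp
      qed
    qed
    have "(\<phi> a + \<phi> b - 2 * \<phi> p)\<^sup>2 / L i = L i"
      unfolding sq dab using Lp by (simp add: power2_eq_square)
    moreover have "(\<phi> a - \<phi> b) / L i = 1" using dab Lp by simp
    ultimately show ?thesis using f2 t1' unfolding a_def b_def by simp
  next
    case False
    then have CF: "graph_connected V F src tgt" unfolding is_bridge_def F_def by simp
    have tn1: "t \<noteq> 1"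
    proof
      assume t1: "t = 1"
      then have "\<forall>w\<in>V. lap F src tgt L \<phi> w = 0" using lapF by simp
      then have "\<phi> a = \<phi> b" using harmonic_const[OF NF CF _ aV bV] by blast
      then show False using t1 t_def by simp
    qed
    define s where "s = 1 - t"
    have s0: "s \<noteq> 0" using tn1 s_def by simp
    have pot1: "is_potential V F src tgt L a b (\<lambda>x. (1 / s) * \<phi> x)"
      unfolding is_potential_lap
    proof (intro conjI ballI allI impI)
      show "1 / s * \<phi> b = 0" using phib by simp
      show "\<And>w. w \<notin> V \<Longrightarrow> 1 / s * \<phi> w = 0" using phi0 by simp
      fix w assume w: "w \<in> V"
      have "lap F src tgt L (\<lambda>x. 1 / s * \<phi> x) w = 1 / s * lap F src tgt L \<phi> w" by (rule lap_scale)
      also have "\<dots> = 1 / s * (s * ((if w = a then 1 else 0) - (if w = b then 1 else 0)))"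
        using lapF w unfolding s_def by simp
      also have "\<dots> = (if w = a then 1 else 0) - (if w = b then 1 else 0)" using s0 by simp
      finally show "lap F src tgt L (\<lambda>x. 1 / s * \<phi> x) w = (if w = a then 1 else 0) - (if w = b then 1 else 0)" .
    qed
    have pot2: "is_potential V F src tgt L b a (\<lambda>x. if x \<in> V then (- 1 / s) * \<phi> x + \<phi> a / s else 0)"
      unfolding is_potential_lap
    proof (intro conjI ballI allI impI)
      show "(if a \<in> V then - 1 / s * \<phi> a + \<phi> a / s else 0) = 0" by simp
      show "\<And>w. w \<notin> V \<Longrightarrow> (if w \<in> V then - 1 / s * \<phi> w + \<phi> a / s else 0) = 0" by simp
      fix w assume w: "w \<in> V"
      have "lap F src tgt L (\<lambda>x. if x \<in> V then - 1 / s * \<phi> x + \<phi> a / s else 0) w =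
            lap F src tgt L (\<lambda>x. (- 1 / s) * \<phi> x) w"
        by (rule lap_local[OF NF w, where c = "\<phi> a / s"]) simp
      also have "\<dots> = (- 1 / s) * lap F src tgt L \<phi> w" by (rule lap_scale)
      also have "\<dots> = (- 1 / s) * (s * ((if w = a then 1 else 0) - (if w = b then 1 else 0)))"
        using lapF w unfolding s_def by simp
      also have "\<dots> = (if w = b then 1 else 0) - (if w = a then 1 else 0)"
        using s0 by simp
      finally show "lap F src tgt L (\<lambda>x. if x \<in> V then - 1 / s * \<phi> x + \<phi> a / s else 0) w =
            (if w = b then 1 else 0) - (if w = a then 1 else 0)" .
    qed
    have Redge: "R_edge V E src tgt L i = \<phi> a / s"
      unfolding R_edge_def eff_res_def using jvolt_eq[OF NF CF bV pot1] unfolding F_def a_def b_def by simp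
    have Ra: "Ra V E src tgt L i p = (\<phi> a - \<phi> p) / s"
      unfolding Ra_def using jvolt_eq[OF NF CF aV pot2, of p] p unfolding F_def a_def b_def
      by (simp add: diff_divide_distrib)
    have Rb: "Rb V E src tgt L i p = \<phi> p / s"
      unfolding Rb_def using jvolt_eq[OF NF CF bV pot1, of p] unfolding F_def a_def b_def by simp
    have LR: "L i + \<phi> a / s = L i / s" using s0 phia unfolding s_def by (simp add: field_simps)
    have f2: "factor2 V E src tgt L i = t"
    proof -
      have "factor2 V E src tgt L i = R_edge V E src tgt L i / (L i + R_edge V E src tgt L i)"
        using False unfolding factor2_def by simp
      also have "\<dots> = (\<phi> a / s) / (L i / s)" using Redge LR by simp
      also have "\<dots> = \<phi> a / L i" using s0 Lp by simp
      also have "\<dots> = t" using phia Lp by simp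
      finally show ?thesis .
    qed
    have t1': "term1 V E src tgt L p i = (\<phi> a - 2 * \<phi> p)\<^sup>2 / L i"
    proof -
      have "term1 V E src tgt L p i = L i * ((\<phi> a - \<phi> p) / s - \<phi> p / s)\<^sup>2 / (L i / s)\<^sup>2"
        unfolding term1_def using False Redge Ra Rb LR unfolding a_def[symmetric] by simp
      also have "\<dots> = (\<phi> a - 2 * \<phi> p)\<^sup>2 / L i"
        using s0 Lp by (simp add: field_simps power2_eq_square)
      finally show ?thesis .
    qed
    show ?thesis using f2 t1' phib unfolding t_def a_def b_def by simp
  qed
qed


lemma sum_delta_const:
  fixes f :: "'a \<Rightarrow> real" and c :: real
  assumes "finite V" "x \<in> V"
  shows "(\<Sum>w\<in>V. f w * ((if w = x then 1 else 0) - c)) = f x - c * (\<Sum>w\<in>V. f w)"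
proof -
  have "(\<Sum>w\<in>V. f w * ((if w = x then 1 else 0) - c)) = (\<Sum>w\<in>V. (if w = x then f w else 0) - c * f w)"
  proof (intro sum.cong refl)
    fix w show "f w * ((if w = x then 1 else 0) - c) = (if w = x then f w else 0) - c * f w"
      by (cases "w = x") (simp_all add: field_simps)
  qed
  also have "\<dots> = f x - c * (\<Sum>w\<in>V. f w)"
    using assms by (simp add: sum_subtractf sum_distrib_left)
  finally show ?thesis .
qed

locale mgr =
  fixes V :: "'v set" and E :: "'e set" and src tgt :: "'e \<Rightarrow> 'v" and L :: "'e \<Rightarrow> real"
  assumes N: "netw V E src tgt L" and C: "graph_connected V E src tgt" and ne: "V \<noteq> {}"
begin

definition gprop :: "'v \<Rightarrow> ('v \<Rightarrow> real) \<Rightarrow> bool" where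
  "gprop y g \<longleftrightarrow> (\<forall>w. w \<notin> V \<longrightarrow> g w = 0) \<and>
     (\<forall>w\<in>V. lap E src tgt L g w = (if w = y then 1 else 0) - 1 / real (card V)) \<and> (\<Sum>w\<in>V. g w) = 0"

definition gp :: "'v \<Rightarrow> 'v \<Rightarrow> real" where
  "gp y = (SOME g. gprop y g)"

lemma fV: "finite V" using N unfolding netw_def by auto

lemma cardV: "real (card V) > 0" using fV ne by (simp add: card_gt_0_iff)

lemma g_ex:
  assumes y: "y \<in> V"
  shows "\<exists>g. gprop y g"
proof -
  define f where "f = (\<lambda>w. (if w = y then 1 else 0) - 1 / real (card V))"
  have fs: "(\<Sum>w\<in>V. f w) = 0"
    unfolding f_def using y fV cardV ne by (simp add: sum_subtractf)
  obtain u where u: "u y = 0" "\<forall>w. w \<notin> V \<longrightarrow> u w = 0" "\<forall>w\<in>V. lap E src tgt L u w = f w"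
    using exists_sol[OF N C y fs] by blast
  define m where "m = (\<Sum>w\<in>V. u w) / real (card V)"
  define g where "g = (\<lambda>x. if x \<in> V then u x - m else 0)"
  have "\<forall>w\<in>V. lap E src tgt L g w = lap E src tgt L u w"
  proof
    fix w assume w: "w \<in> V"
    show "lap E src tgt L g w = lap E src tgt L u w"
      by (rule lap_local[OF N w, where c = "- m"]) (simp add: g_def)
  qed
  moreover have "(\<Sum>w\<in>V. g w) = 0"
  proof -
    have "(\<Sum>w\<in>V. g w) = (\<Sum>w\<in>V. u w - m)" unfolding g_def by (intro sum.cong) auto
    also have "\<dots> = (\<Sum>w\<in>V. u w) - real (card V) * m" by (simp add: sum_subtractf)
    also have "\<dots> = 0" unfolding m_def using cardV by simp
    finally show ?thesis .
  qed
  ultimately have "gprop y g" unfolding gprop_def using u unfolding f_def g_def by auto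
  then show ?thesis by blast
qed

lemma g_props:
  assumes "y \<in> V"
  shows "gprop y (gp y)"
  unfolding gp_def using g_ex[OF assms] by (rule someI_ex)

lemma g_zero: "y \<in> V \<Longrightarrow> w \<notin> V \<Longrightarrow> gp y w = 0"
  using g_props unfolding gprop_def by blast

lemma g_lap: "y \<in> V \<Longrightarrow> w \<in> V \<Longrightarrow> lap E src tgt L (gp y) w = (if w = y then 1 else 0) - 1 / real (card V)"
  using g_props unfolding gprop_def by blast

lemma g_sum: "y \<in> V \<Longrightarrow> (\<Sum>w\<in>V. gp y w) = 0"
  using g_props unfolding gprop_def by blast

lemma g_pair:
  assumes "x \<in> V" "y \<in> V"
  shows "(\<Sum>w\<in>V. gp y w * lap E src tgt L (gp x) w) = gp y x"
proof -
  have "(\<Sum>w\<in>V. gp y w * lap E src tgt L (gp x) w) = (\<Sum>w\<in>V. gp y w * ((if w = x then 1 else 0) - 1 / real (card V)))"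
    using g_lap[OF assms(1)] by (intro sum.cong refl) simp
  also have "\<dots> = gp y x" using sum_delta_const[OF fV assms(1), of "gp y" "1 / real (card V)"] g_sum[OF assms(2)] by simp
  finally show ?thesis .
qed

lemma g_sym:
  assumes "x \<in> V" "y \<in> V"
  shows "gp y x = gp x y"
proof -
  have "gp y x = (\<Sum>e\<in>E. (gp y (src e) - gp y (tgt e)) * (gp x (src e) - gp x (tgt e)) / L e)"
    using g_pair[OF assms] green[OF N] by simp
  also have "\<dots> = (\<Sum>e\<in>E. (gp x (src e) - gp x (tgt e)) * (gp y (src e) - gp y (tgt e)) / L e)"
    by (simp add: mult.commute)
  also have "\<dots> = gp x y"
    using g_pair[OF assms(2) assms(1)] green[OF N] by simp
  finally show ?thesis .
qed

lemma pot_G: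
  assumes y: "y \<in> V" and z: "z \<in> V"
  shows "is_potential V E src tgt L y z (\<lambda>x. if x \<in> V then gp y x - gp z x - gp y z + gp z z else 0)"
  unfolding is_potential_lap
proof (intro conjI allI impI ballI)
  show "(if z \<in> V then gp y z - gp z z - gp y z + gp z z else 0) = 0" by simp
  show "\<And>w. w \<notin> V \<Longrightarrow> (if w \<in> V then gp y w - gp z w - gp y z + gp z z else 0) = 0" by simp
  fix w assume w: "w \<in> V"
  have "lap E src tgt L (\<lambda>x. if x \<in> V then gp y x - gp z x - gp y z + gp z z else 0) w
      = lap E src tgt L (\<lambda>x. gp y x - gp z x) w"
    by (rule lap_local[OF N w, where c = "- gp y z + gp z z"]) simp
  also have "\<dots> = lap E src tgt L (gp y) w - lap E src tgt L (gp z) w" by (rule lap_diff)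
  also have "\<dots> = (if w = y then 1 else 0) - (if w = z then 1 else 0)"
    using g_lap[OF y w] g_lap[OF z w] by simp
  finally show "lap E src tgt L (\<lambda>x. if x \<in> V then gp y x - gp z x - gp y z + gp z z else 0) w =
      (if w = y then 1 else 0) - (if w = z then 1 else 0)" .
qed

lemma res_G:
  assumes x: "x \<in> V" and y: "y \<in> V"
  shows "eff_res V E src tgt L x y = gp x x - gp y x - gp x y + gp y y"
  unfolding eff_res_def using jvolt_eq[OF N C y pot_G[OF x y], of x] x by simp

end


lemma alg_id:
  fixes l v D P r ga gb tr :: real
  assumes "l \<noteq> 0"
  shows "v * ((D - 2 * P)\<^sup>2 / l) + (r / l) * ((v * ga + tr) + (v * gb + tr)) =
    v * ((D\<^sup>2 + r * (ga + gb)) / l) - 4 * v * (D * P / l) + 4 * v * (P\<^sup>2 / l) + 2 * tr * (r / l)"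
  using assms by (simp add: field_simps power2_eq_square)

context mgr begin

definition tr where "tr = (\<Sum>x\<in>V. gp x x)"

lemma srcV: "i \<in> E \<Longrightarrow> src i \<in> V" and tgtV: "i \<in> E \<Longrightarrow> tgt i \<in> V" and Lpos: "i \<in> E \<Longrightarrow> L i > 0"
  using N unfolding netw_def by auto

lemma row_sum:
  assumes x: "x \<in> V"
  shows "(\<Sum>y\<in>V. eff_res V E src tgt L x y) = real (card V) * gp x x + tr"
proof -
  have "(\<Sum>y\<in>V. eff_res V E src tgt L x y) = (\<Sum>y\<in>V. gp x x - 2 * gp x y + gp y y)"
  proof (intro sum.cong refl)
    fix y assume y: "y \<in> V"
    show "eff_res V E src tgt L x y = gp x x - 2 * gp x y + gp y y"
      using res_G[OF x y] g_sym[OF x y] by simp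
  qed
  also have "\<dots> = real (card V) * gp x x - 2 * (\<Sum>y\<in>V. gp x y) + tr"
    unfolding tr_def by (simp add: sum.distrib sum_subtractf sum_distrib_left)
  also have "\<dots> = real (card V) * gp x x + tr" using g_sum[OF x] by simp
  finally show ?thesis .
qed

lemma Kf_val: "Kf V E src tgt L = real (card V) * tr"
proof -
  have "Kf V E src tgt L = (1/2) * (\<Sum>x\<in>V. real (card V) * gp x x + tr)"
    unfolding Kf_def using row_sum by simp
  also have "\<dots> = real (card V) * tr"
    unfolding tr_def by (simp add: sum.distrib sum_distrib_left[symmetric])
  finally show ?thesis .
qed

lemma del_G:
  assumes i: "i \<in> E" and p: "p \<in> V"
  shows "factor2 V E src tgt L i = (gp (src i) (src i) + gp (tgt i) (tgt i) - 2 * gp (src i) (tgt i)) / L i \<and>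
    term1 V E src tgt L p i = ((gp (src i) (src i) - gp (tgt i) (tgt i)) - 2 * (gp (src i) p - gp (tgt i) p))\<^sup>2 / L i"
proof -
  define a where "a = src i"
  define b where "b = tgt i"
  have a: "a \<in> V" and b: "b \<in> V" using srcV[OF i] tgtV[OF i] unfolding a_def b_def by auto
  define \<phi> where "\<phi> = (\<lambda>x. if x \<in> V then gp a x - gp b x - gp a b + gp b b else 0)"
  have D: "factor2 V E src tgt L i = (\<phi> a - \<phi> b) / L i \<and>
         term1 V E src tgt L p i = (\<phi> a + \<phi> b - 2 * \<phi> p)\<^sup>2 / L i"
    using deletion[OF N C i p] pot_G[OF a b] unfolding \<phi>_def a_def b_def by blast
  have sym: "gp b a = gp a b" using g_sym[OF a b] .
  have e1: "\<phi> a - \<phi> b = gp a a + gp b b - 2 * gp a b" unfolding \<phi>_def using a b sym by simp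
  have e2: "\<phi> a + \<phi> b - 2 * \<phi> p = (gp a a - gp b b) - 2 * (gp a p - gp b p)"
    unfolding \<phi>_def using a b p sym by simp
  from D have D': "factor2 V E src tgt L i = (gp a a + gp b b - 2 * gp a b) / L i \<and>
    term1 V E src tgt L p i = ((gp a a - gp b b) - 2 * (gp a p - gp b p))\<^sup>2 / L i"
    unfolding e1 e2 .
  then show ?thesis unfolding a_def b_def .
qed

lemma sum_e:
  assumes p: "p \<in> V"
  shows "(\<Sum>i\<in>E. (gp (src i) p - gp (tgt i) p)\<^sup>2 / L i) = gp p p"
proof -
  have "gp p p = (\<Sum>e\<in>E. (gp p (src e) - gp p (tgt e)) * (gp p (src e) - gp p (tgt e)) / L e)"
    using g_pair[OF p p] green[OF N] by simp
  also have "\<dots> = (\<Sum>i\<in>E. (gp (src i) p - gp (tgt i) p)\<^sup>2 / L i)"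
  proof (intro sum.cong refl)
    fix i assume i: "i \<in> E"
    show "(gp p (src i) - gp p (tgt i)) * (gp p (src i) - gp p (tgt i)) / L i = (gp (src i) p - gp (tgt i) p)\<^sup>2 / L i"
      using g_sym[OF srcV[OF i] p] g_sym[OF tgtV[OF i] p] by (simp add: power2_eq_square)
  qed
  finally show ?thesis by simp
qed

lemma sum_f:
  assumes p: "p \<in> V"
  shows "(\<Sum>i\<in>E. (gp (src i) (src i) - gp (tgt i) (tgt i)) * (gp (src i) p - gp (tgt i) p) / L i)
     = gp p p - tr / real (card V)"
proof -
  have "(\<Sum>w\<in>V. gp w w * lap E src tgt L (gp p) w) = (\<Sum>w\<in>V. gp w w * ((if w = p then 1 else 0) - 1 / real (card V)))"
    using g_lap[OF p] by (intro sum.cong refl) simp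
  also have "\<dots> = gp p p - tr / real (card V)"
    using sum_delta_const[OF fV p, of "\<lambda>w. gp w w" "1 / real (card V)"] unfolding tr_def by simp
  finally have 1: "(\<Sum>w\<in>V. gp w w * lap E src tgt L (gp p) w) = gp p p - tr / real (card V)" .
  have "(\<Sum>w\<in>V. gp w w * lap E src tgt L (gp p) w) =
     (\<Sum>e\<in>E. (gp (src e) (src e) - gp (tgt e) (tgt e)) * (gp p (src e) - gp p (tgt e)) / L e)"
    by (rule green[OF N])
  also have "\<dots> = (\<Sum>i\<in>E. (gp (src i) (src i) - gp (tgt i) (tgt i)) * (gp (src i) p - gp (tgt i) p) / L i)"
  proof (intro sum.cong refl)
    fix i assume i: "i \<in> E"
    show "(gp (src i) (src i) - gp (tgt i) (tgt i)) * (gp p (src i) - gp p (tgt i)) / L i =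
          (gp (src i) (src i) - gp (tgt i) (tgt i)) * (gp (src i) p - gp (tgt i) p) / L i"
      using g_sym[OF srcV[OF i] p] g_sym[OF tgtV[OF i] p] by simp
  qed
  finally show ?thesis using 1 by simp
qed

lemma lap_self: "w \<in> V \<Longrightarrow> lap E src tgt L (gp w) w = 1 - 1 / real (card V)"
  using g_lap by simp

lemma sum_d:
  "(\<Sum>i\<in>E. (gp (src i) (src i) + gp (tgt i) (tgt i) - 2 * gp (src i) (tgt i)) / L i) = real (card V) - 1"
proof -
  have "(\<Sum>w\<in>V. lap E src tgt L (gp w) w) = (\<Sum>w\<in>V. 1 - 1 / real (card V))"
    using lap_self by simp
  also have "\<dots> = real (card V) - 1" using cardV by (simp add: field_simps)
  finally have 1: "(\<Sum>w\<in>V. lap E src tgt L (gp w) w) = real (card V) - 1" .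
  have "(\<Sum>w\<in>V. lap E src tgt L (gp w) w) =
     (\<Sum>e\<in>E. (gp (src e) (src e) - gp (src e) (tgt e)) / L e + (gp (tgt e) (tgt e) - gp (tgt e) (src e)) / L e)"
    unfolding lap_def by (rule regroup[OF N])
  also have "\<dots> = (\<Sum>i\<in>E. (gp (src i) (src i) + gp (tgt i) (tgt i) - 2 * gp (src i) (tgt i)) / L i)"
  proof (intro sum.cong refl)
    fix i assume i: "i \<in> E"
    show "(gp (src i) (src i) - gp (src i) (tgt i)) / L i + (gp (tgt i) (tgt i) - gp (tgt i) (src i)) / L i =
       (gp (src i) (src i) + gp (tgt i) (tgt i) - 2 * gp (src i) (tgt i)) / L i"
      using g_sym[OF srcV[OF i] tgtV[OF i]] by (simp add: add_divide_distrib[symmetric])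
  qed
  finally show ?thesis using 1 by simp
qed

lemma sum_g:
  "(\<Sum>i\<in>E. ((gp (src i) (src i) - gp (tgt i) (tgt i))\<^sup>2 +
     (gp (src i) (src i) + gp (tgt i) (tgt i) - 2 * gp (src i) (tgt i)) * (gp (src i) (src i) + gp (tgt i) (tgt i))) / L i)
   = 2 * (1 - 1 / real (card V)) * tr"
proof -
  have "(\<Sum>w\<in>V. 2 * gp w w * lap E src tgt L (gp w) w) = (\<Sum>w\<in>V. 2 * (1 - 1 / real (card V)) * gp w w)"
    using lap_self by (intro sum.cong refl) simp
  also have "\<dots> = 2 * (1 - 1 / real (card V)) * tr" unfolding tr_def by (simp add: sum_distrib_left)
  finally have 1: "(\<Sum>w\<in>V. 2 * gp w w * lap E src tgt L (gp w) w) = 2 * (1 - 1 / real (card V)) * tr" .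
  have "(\<Sum>w\<in>V. 2 * gp w w * lap E src tgt L (gp w) w) =
     (\<Sum>w\<in>V. (\<Sum>e\<in>{e\<in>E. src e = w}. 2 * gp w w * (gp w w - gp w (tgt e)) / L e)
        + (\<Sum>e\<in>{e\<in>E. tgt e = w}. 2 * gp w w * (gp w w - gp w (src e)) / L e))"
    unfolding lap_def by (simp add: distrib_left sum_distrib_left)
  also have "\<dots> = (\<Sum>e\<in>E. 2 * gp (src e) (src e) * (gp (src e) (src e) - gp (src e) (tgt e)) / L e
        + 2 * gp (tgt e) (tgt e) * (gp (tgt e) (tgt e) - gp (tgt e) (src e)) / L e)"
    by (rule regroup[OF N])
  also have "\<dots> = (\<Sum>i\<in>E. ((gp (src i) (src i) - gp (tgt i) (tgt i))\<^sup>2 +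
     (gp (src i) (src i) + gp (tgt i) (tgt i) - 2 * gp (src i) (tgt i)) * (gp (src i) (src i) + gp (tgt i) (tgt i))) / L i)"
  proof (intro sum.cong refl)
    fix i assume i: "i \<in> E"
    have s: "gp (tgt i) (src i) = gp (src i) (tgt i)" using g_sym[OF srcV[OF i] tgtV[OF i]] .
    show "2 * gp (src i) (src i) * (gp (src i) (src i) - gp (src i) (tgt i)) / L i
        + 2 * gp (tgt i) (tgt i) * (gp (tgt i) (tgt i) - gp (tgt i) (src i)) / L i =
        ((gp (src i) (src i) - gp (tgt i) (tgt i))\<^sup>2 +
     (gp (src i) (src i) + gp (tgt i) (tgt i) - 2 * gp (src i) (tgt i)) * (gp (src i) (src i) + gp (tgt i) (tgt i))) / L i"
      unfolding s by (simp only: add_divide_distrib[symmetric]) (simp add: algebra_simps power2_eq_square)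
  qed
  finally show ?thesis using 1 by simp
qed

end


theorem lemma3p4:
  fixes V :: "'v set" and E :: "'e set" and src tgt :: "'e \<Rightarrow> 'v"
    and L :: "'e \<Rightarrow> real" and p :: 'v
  assumes "metrized_graph V E src tgt L"
    and "p \<in> V"
  shows "4 * Kf V E src tgt L =
           real (card V) * (\<Sum>i\<in>E. term1 V E src tgt L p i)
         + (\<Sum>i\<in>E. factor2 V E src tgt L i *
              (\<Sum>w\<in>V. eff_res V E src tgt L (src i) w + eff_res V E src tgt L (tgt i) w))"
proof -
  have N: "netw V E src tgt L" using assms(1) unfolding metrized_graph_def netw_def by auto
  have C: "graph_connected V E src tgt" using assms(1) unfolding metrized_graph_def by auto
  have ne: "V \<noteq> {}" using assms(1) unfolding metrized_graph_def by auto
  interpret mgr V E src tgt L by unfold_locales (fact N C ne)+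
  have p: "p \<in> V" by fact
  define v where "v = real (card V)"
  have v0: "v \<noteq> 0" using cardV unfolding v_def by simp
  define Dq where "Dq = (\<lambda>i. gp (src i) (src i) - gp (tgt i) (tgt i))"
  define Pq where "Pq = (\<lambda>i. gp (src i) p - gp (tgt i) p)"
  define rq where "rq = (\<lambda>i. gp (src i) (src i) + gp (tgt i) (tgt i) - 2 * gp (src i) (tgt i))"
  define Xq where "Xq = (\<lambda>i. (Dq i)\<^sup>2 + rq i * (gp (src i) (src i) + gp (tgt i) (tgt i)))"
  have per: "v * term1 V E src tgt L p i + factor2 V E src tgt L i *
              (\<Sum>w\<in>V. eff_res V E src tgt L (src i) w + eff_res V E src tgt L (tgt i) w)
     = v * (Xq i / L i) - 4 * v * (Dq i * Pq i / L i) + 4 * v * ((Pq i)\<^sup>2 / L i) + 2 * tr * (rq i / L i)"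
    if i: "i \<in> E" for i
  proof -
    have S: "(\<Sum>w\<in>V. eff_res V E src tgt L (src i) w + eff_res V E src tgt L (tgt i) w)
       = (v * gp (src i) (src i) + tr) + (v * gp (tgt i) (tgt i) + tr)"
      using row_sum[OF srcV[OF i]] row_sum[OF tgtV[OF i]] unfolding v_def by (simp add: sum.distrib)
    have L0: "L i \<noteq> 0" using Lpos[OF i] by simp
    have F: "factor2 V E src tgt L i = rq i / L i" and T: "term1 V E src tgt L p i = (Dq i - 2 * Pq i)\<^sup>2 / L i"
      using del_G[OF i p] unfolding Dq_def Pq_def rq_def by auto
    show ?thesis unfolding F T S Xq_def by (rule alg_id[OF L0])
  qed
  have "real (card V) * (\<Sum>i\<in>E. term1 V E src tgt L p i)
         + (\<Sum>i\<in>E. factor2 V E src tgt L i *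
              (\<Sum>w\<in>V. eff_res V E src tgt L (src i) w + eff_res V E src tgt L (tgt i) w))
      = (\<Sum>i\<in>E. v * term1 V E src tgt L p i + factor2 V E src tgt L i *
              (\<Sum>w\<in>V. eff_res V E src tgt L (src i) w + eff_res V E src tgt L (tgt i) w))"
    unfolding v_def by (simp add: sum.distrib sum_distrib_left)
  also have "\<dots> = (\<Sum>i\<in>E. v * (Xq i / L i) - 4 * v * (Dq i * Pq i / L i) + 4 * v * ((Pq i)\<^sup>2 / L i) + 2 * tr * (rq i / L i))"
    using per by (intro sum.cong refl) simp
  also have "\<dots> = v * (\<Sum>i\<in>E. Xq i / L i) - 4 * v * (\<Sum>i\<in>E. Dq i * Pq i / L i)
       + 4 * v * (\<Sum>i\<in>E. (Pq i)\<^sup>2 / L i) + 2 * tr * (\<Sum>i\<in>E. rq i / L i)"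
    by (simp add: sum.distrib sum_subtractf sum_distrib_left)
  also have "\<dots> = v * (2 * (1 - 1 / v) * tr) - 4 * v * (gp p p - tr / v) + 4 * v * gp p p + 2 * tr * (v - 1)"
    using sum_g sum_f[OF p] sum_e[OF p] sum_d unfolding Xq_def Dq_def Pq_def rq_def v_def by simp
  also have "\<dots> = 4 * (v * tr)" using v0 by (simp add: field_simps)
  also have "\<dots> = 4 * Kf V E src tgt L" using Kf_val unfolding v_def by simp
  finally show ?thesis by simp
qed

end
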